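(* Let $1\le s<t\le k$ and $u,v\ge 2$ be integers. If there exist an AOA$(s,t,k,v)$ and an AOA$(s,t,k,u)$, then there exists an AOA$(s,t,k,uv)$.
   Context: An orthogonal array OA$(t,k,v)$ (with $1\le t\le k$) is a $v^t\times k$ array with entries from a set $X$ of size $v$ such that, for every choice of $t$ of its columns, each $t$-tuple in $X^t$ appears exactly once as a row of the corresponding $v^t\times t$ subarray. For integers $1\le s\le t\le k$, an augmented orthogonal array AOA$(s,t,k,v)$ is a $v^t\times(k+1)$ array $A$ such that: (1) the first $k$ columns of $A$ form an OA$(t,k,v)$ on a symbol set $X$ of size $v$; (2) the last column of $A$ has entries from a set $Y$ of size $v^{t-s}$; (3) for any choice of $s$ of the first $k$ columns, these $s$ columns together with the last column contain every $(s+1)$-tuple of $X^s\times Y$ exactly once as a row. *)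

theory Defs
  imports Main
begin

text \<open>An array with N rows and columns indexed by naturals is a function
  A :: nat => nat => 'a, where A r c is the entry in row r < N, column c.\<close>

definition is_OA :: "nat \<Rightarrow> nat \<Rightarrow> nat \<Rightarrow> 'a set \<Rightarrow> (nat \<Rightarrow> nat \<Rightarrow> 'a) \<Rightarrow> bool" where
  "is_OA t k v X A \<longleftrightarrow>
     1 \<le> t \<and> t \<le> k \<and> finite X \<and> card X = v \<and>
     (\<forall>r < v ^ t. \<forall>c < k. A r c \<in> X) \<and>
     (\<forall>C. C \<subseteq> {0..<k} \<and> card C = t \<longrightarrow>
        (\<forall>f. (\<forall>c\<in>C. f c \<in> X) \<longrightarrow>
           (\<exists>!r. r < v ^ t \<and> (\<forall>c\<in>C. A r c = f c))))"

definition is_AOA :: "nat \<Rightarrow> nat \<Rightarrow> nat \<Rightarrow> nat \<Rightarrow> 'a set \<Rightarrow> 'a set \<Rightarrow> (nat \<Rightarrow> nat \<Rightarrow> 'a) \<Rightarrow> bool" where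
  "is_AOA s t k v X Y A \<longleftrightarrow>
     1 \<le> s \<and> s \<le> t \<and> is_OA t k v X A \<and>
     finite Y \<and> card Y = v ^ (t - s) \<and>
     (\<forall>r < v ^ t. A r k \<in> Y) \<and>
     (\<forall>C. C \<subseteq> {0..<k} \<and> card C = s \<longrightarrow>
        (\<forall>f y. (\<forall>c\<in>C. f c \<in> X) \<and> y \<in> Y \<longrightarrow>
           (\<exists>!r. r < v ^ t \<and> (\<forall>c\<in>C. A r c = f c) \<and> A r k = y)))"

end

theory Submission
  imports Defs "HOL-Library.Nat_Bijection"
begin

lemma ex1_pair:
  fixes N1 N2 :: nat
  assumes "\<exists>!r1. r1 < N1 \<and> P1 r1" "\<exists>!r2. r2 < N2 \<and> P2 r2"
  shows "\<exists>!r. r < N1 * N2 \<and> P1 (r mod N1) \<and> P2 (r div N1)"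
proof -
  obtain r1 where r1: "r1 < N1" "P1 r1" "\<And>x. x < N1 \<and> P1 x \<Longrightarrow> x = r1" using assms(1) by blast
  obtain r2 where r2: "r2 < N2" "P2 r2" "\<And>x. x < N2 \<and> P2 x \<Longrightarrow> x = r2" using assms(2) by blast
  have pos: "N1 > 0" using r1(1) by simp
  show ?thesis
  proof (rule ex1I[of _ "r2 * N1 + r1"])
    have "r2 * N1 + r1 < N1 * N2"
    proof -
      have "r2 * N1 + r1 < r2 * N1 + N1" using r1(1) by simp
      also have "\<dots> = (r2 + 1) * N1" by simp
      also have "\<dots> \<le> N2 * N1" using r2(1) by (intro mult_right_mono) auto
      finally show ?thesis by (simp add: mult.commute)
    qed
    then show "r2 * N1 + r1 < N1 * N2 \<and> P1 ((r2 * N1 + r1) mod N1) \<and> P2 ((r2 * N1 + r1) div N1)"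
      using r1(1,2) r2(1,2) pos by simp
  next
    fix r assume h: "r < N1 * N2 \<and> P1 (r mod N1) \<and> P2 (r div N1)"
    have "r mod N1 = r1" using h pos r1(3) by simp
    moreover have "r div N1 < N2" using h by (simp add: less_mult_imp_div_less mult.commute)
    hence "r div N1 = r2" using h r2(3) by simp
    ultimately show "r = r2 * N1 + r1" by (metis div_mult_mod_eq)
  qed
qed

definition comb :: "nat \<Rightarrow> (nat \<Rightarrow> nat \<Rightarrow> nat) \<Rightarrow> (nat \<Rightarrow> nat \<Rightarrow> nat) \<Rightarrow> nat \<Rightarrow> nat \<Rightarrow> nat" where
  "comb N A1 A2 = (\<lambda>r c. prod_encode (A1 (r mod N) c, A2 (r div N) c))"

lemma comb_eq: "(comb N A1 A2 r c = g) \<longleftrightarrow>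
   (A1 (r mod N) c = fst (prod_decode g) \<and> A2 (r div N) c = snd (prod_decode g))"
  unfolding comb_def by (metis fst_conv snd_conv prod.collapse prod_decode_inverse prod_encode_inverse)

lemma comb_all: "(\<forall>c\<in>D. comb N A1 A2 r c = g c) \<longleftrightarrow>
   (\<forall>c\<in>D. A1 (r mod N) c = fst (prod_decode (g c))) \<and> (\<forall>c\<in>D. A2 (r div N) c = snd (prod_decode (g c)))"
  using comb_eq by blast

lemma dec_mem: "x \<in> prod_encode ` (S1 \<times> S2) \<Longrightarrow> fst (prod_decode x) \<in> S1 \<and> snd (prod_decode x) \<in> S2"
  by auto

lemma card_enc: "finite S1 \<Longrightarrow> finite S2 \<Longrightarrow> card (prod_encode ` (S1 \<times> S2)) = card S1 * card S2"
  by (simp add: card_image inj_prod_encode card_cartesian_product)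

lemma AOA_OA_uniq:
  assumes "is_AOA s t k v X Y A" "C \<subseteq> {0..<k}" "card C = t" "\<forall>c\<in>C. f c \<in> X"
  shows "\<exists>!r. r < v ^ t \<and> (\<forall>c\<in>C. A r c = f c)"
proof -
  have "\<forall>C. C \<subseteq> {0..<k} \<and> card C = t \<longrightarrow>
        (\<forall>f. (\<forall>c\<in>C. f c \<in> X) \<longrightarrow> (\<exists>!r. r < v ^ t \<and> (\<forall>c\<in>C. A r c = f c)))"
    using assms(1) unfolding is_AOA_def is_OA_def by (elim conjE)
  then show ?thesis using assms(2-4) by simp
qed

lemma AOA_uniq:
  assumes "is_AOA s t k v X Y A" "C \<subseteq> {0..<k}" "card C = s" "\<forall>c\<in>C. f c \<in> X" "y \<in> Y"
  shows "\<exists>!r. r < v ^ t \<and> (\<forall>c\<in>C. A r c = f c) \<and> A r k = y"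
proof -
  have "\<forall>C. C \<subseteq> {0..<k} \<and> card C = s \<longrightarrow>
        (\<forall>f y. (\<forall>c\<in>C. f c \<in> X) \<and> y \<in> Y \<longrightarrow>
           (\<exists>!r. r < v ^ t \<and> (\<forall>c\<in>C. A r c = f c) \<and> A r k = y))"
    using assms(1) unfolding is_AOA_def by (elim conjE)
  then show ?thesis using assms(2-5) by simp
qed

theorem theorem2p1:
  fixes s t k u v :: nat
  assumes "1 \<le> s" and "s < t" and "t \<le> k" and "u \<ge> 2" and "v \<ge> 2"
    and "\<exists>(A :: nat \<Rightarrow> nat \<Rightarrow> nat) X Y. is_AOA s t k v X Y A"
    and "\<exists>(A :: nat \<Rightarrow> nat \<Rightarrow> nat) X Y. is_AOA s t k u X Y A"
  shows "\<exists>(A :: nat \<Rightarrow> nat \<Rightarrow> nat) X Y. is_AOA s t k (u * v) X Y A"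
proof -
  obtain A1 :: "nat \<Rightarrow> nat \<Rightarrow> nat" and X1 Y1 where h1: "is_AOA s t k v X1 Y1 A1" using assms(6) by blast
  obtain A2 :: "nat \<Rightarrow> nat \<Rightarrow> nat" and X2 Y2 where h2: "is_AOA s t k u X2 Y2 A2" using assms(7) by blast
  define A where "A = comb (v ^ t) A1 A2"
  define X where "X = prod_encode ` (X1 \<times> X2)"
  define Y where "Y = prod_encode ` (Y1 \<times> Y2)"
  have d1: "1 \<le> s" "s \<le> t" "1 \<le> t" "t \<le> k" "finite X1" "card X1 = v" "finite Y1" "card Y1 = v^(t-s)"

    using h1 unfolding is_AOA_def is_OA_def by (simp_all only:)
  have "\<forall>r<v^t. \<forall>c<k. A1 r c \<in> X1" using h1 unfolding is_AOA_def is_OA_def by (elim conjE) assumption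
  moreover have "\<forall>r<v^t. A1 r k \<in> Y1" using h1 unfolding is_AOA_def is_OA_def by (elim conjE) assumption
  ultimately have d1': "\<forall>r<v^t. \<forall>c<k. A1 r c \<in> X1" "\<forall>r<v^t. A1 r k \<in> Y1" by blast+
  have d2: "finite X2" "card X2 = u" "finite Y2" "card Y2 = u^(t-s)"

    using h2 unfolding is_AOA_def is_OA_def by (simp_all only:)
  have "\<forall>r<u^t. \<forall>c<k. A2 r c \<in> X2" using h2 unfolding is_AOA_def is_OA_def by (elim conjE) assumption
  moreover have "\<forall>r<u^t. A2 r k \<in> Y2" using h2 unfolding is_AOA_def is_OA_def by (elim conjE) assumption
  ultimately have d2': "\<forall>r<u^t. \<forall>c<k. A2 r c \<in> X2" "\<forall>r<u^t. A2 r k \<in> Y2" by blast+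
  have N: "(u * v) ^ t = v ^ t * u ^ t" by (simp add: power_mult_distrib)
  have rows: "r mod v ^ t < v ^ t \<and> r div v ^ t < u ^ t" if "r < (u * v) ^ t" for r
  proof -
    have "v ^ t > 0" using assms(5) by simp
    moreover have "r < u ^ t * v ^ t" using that N by (simp add: mult.commute)
    ultimately show ?thesis by (simp add: less_mult_imp_div_less)
  qed
  have entry: "A r c = prod_encode (A1 (r mod v ^ t) c, A2 (r div v ^ t) c)" for r c
    by (simp add: A_def comb_def)
  have OA: "is_OA t k (u * v) X A"
    unfolding is_OA_def
  proof (intro conjI allI impI)
    show "1 \<le> t" "t \<le> k" using d1 by auto
    show "finite X" using d1 d2 by (simp add: X_def)
    show "card X = u * v" using d1 d2 by (simp add: X_def card_enc)
    fix r c assume "r < (u * v) ^ t" "c < k"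
    then show "A r c \<in> X" using rows[of r] d1 d2 d1' d2' by (simp add: entry X_def)
  next
    fix C f assume C: "C \<subseteq> {0..<k} \<and> card C = t" and f: "\<forall>c\<in>C. f c \<in> X"
    have m: "\<forall>c\<in>C. fst (prod_decode (f c)) \<in> X1 \<and> snd (prod_decode (f c)) \<in> X2"
      using f dec_mem unfolding X_def by blast
    have e1: "\<exists>!r1. r1 < v ^ t \<and> (\<forall>c\<in>C. A1 r1 c = fst (prod_decode (f c)))"
      using AOA_OA_uniq[OF h1, of C "\<lambda>c. fst (prod_decode (f c))"] C m by blast
    have e2: "\<exists>!r2. r2 < u ^ t \<and> (\<forall>c\<in>C. A2 r2 c = snd (prod_decode (f c)))"
      using AOA_OA_uniq[OF h2, of C "\<lambda>c. snd (prod_decode (f c))"] C m by blast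
    show "\<exists>!r. r < (u * v) ^ t \<and> (\<forall>c\<in>C. A r c = f c)"
      using ex1_pair[OF e1 e2] unfolding N A_def comb_all conj_assoc .
  qed
  have "is_AOA s t k (u * v) X Y A"
    unfolding is_AOA_def
  proof (intro conjI allI impI OA)
    show "1 \<le> s" "s \<le> t" using d1 by auto
    show "finite Y" using d1 d2 by (simp add: Y_def)
    show "card Y = (u * v) ^ (t - s)" using d1 d2 by (simp add: Y_def card_enc power_mult_distrib)
    fix r assume "r < (u * v) ^ t"
    then show "A r k \<in> Y" using rows[of r] d1 d2 d1' d2' by (simp add: entry Y_def)
  next
    fix C f y assume C: "C \<subseteq> {0..<k} \<and> card C = s" and fy: "(\<forall>c\<in>C. f c \<in> X) \<and> y \<in> Y"
    have m: "\<forall>c\<in>C. fst (prod_decode (f c)) \<in> X1 \<and> snd (prod_decode (f c)) \<in> X2"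
      using fy dec_mem unfolding X_def by blast
    have my: "fst (prod_decode y) \<in> Y1 \<and> snd (prod_decode y) \<in> Y2"
      using fy dec_mem unfolding Y_def by blast
    have e1: "\<exists>!r1. r1 < v ^ t \<and> ((\<forall>c\<in>C. A1 r1 c = fst (prod_decode (f c))) \<and> A1 r1 k = fst (prod_decode y))"
      using AOA_uniq[OF h1, of C "\<lambda>c. fst (prod_decode (f c))" "fst (prod_decode y)"] C m my by simp
    have e2: "\<exists>!r2. r2 < u ^ t \<and> ((\<forall>c\<in>C. A2 r2 c = snd (prod_decode (f c))) \<and> A2 r2 k = snd (prod_decode y))"
      using AOA_uniq[OF h2, of C "\<lambda>c. snd (prod_decode (f c))" "snd (prod_decode y)"] C m my by simp
    have eq: "\<And>r. ((\<forall>c\<in>C. A r c = f c) \<and> A r k = y) \<longleftrightarrow>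
       (((\<forall>c\<in>C. A1 (r mod v ^ t) c = fst (prod_decode (f c))) \<and> A1 (r mod v ^ t) k = fst (prod_decode y)) \<and>
        ((\<forall>c\<in>C. A2 (r div v ^ t) c = snd (prod_decode (f c))) \<and> A2 (r div v ^ t) k = snd (prod_decode y)))"
      unfolding A_def comb_all comb_eq by blast
    show "\<exists>!r. r < (u * v) ^ t \<and> (\<forall>c\<in>C. A r c = f c) \<and> A r k = y"
      using ex1_pair[OF e1 e2] unfolding N conj_assoc[symmetric] eq .
  qed
  then show ?thesis by blast
qed

end
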